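(* Let $A=\{a_1,\dots,a_k\}$ with $k\ge2$ and let $Z\subseteq A^+$ be a finite code of standard form with $\gcd(|Z_{a_1}|,\dots,|Z_{a_k}|)>1$. Fix $t\in\{1,\dots,k\}$ and $w\in Z_{a_t}$ with $|w|=\min\{|z|: z\in Z\}$. Let $P_w$ be the set of non-empty proper prefixes of $w$, and let $D$ be the set of integers $d\ge2$ dividing all of $|Z_{a_1}|,\dots,|Z_{a_k}|$. For $u\in P_w$ let $Q_u=\{U\subseteq u^{-1}Z_{a_t}: |U|\in D\}$, and for a non-empty finite set $Y$ let $R_Y=\{V\subseteq \bigcap_{y\in Y}Zy^{-1}: |V|=|Z|/|Y|\}$. Then $Z$ is an alt-induced code if and only if there exist $u\in P_w$, $Y\in Q_u$ and $X\in R_Y$ such that $Z=XY$.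
   Context: $A^+$ is the set of non-empty words over $A$; $|w|$ is the length of a word, $|S|$ the cardinality of a set; $XY=\{xy:x\in X,y\in Y\}$. For $a\in A$, $Z_a$ is the set of words of $Z$ beginning with $a$. For a word $u$: $u^{-1}S=\{v\in A^*: uv\in S\}$ and $Su^{-1}=\{v\in A^*: vu\in S\}$. A code is a subset of $A^+$ in which every word has at most one factorization into its elements. A finite code $Z$ over $A$ is of standard form if every word of $Z$ has length at least $2$, it is not the case that all words of $Z$ begin with the same letter, and it is not the case that all words of $Z$ end with the same letter. For non-empty $X,Y\subseteq A^+$, $(X,Y)$ is an alternative code if $XY$ is a code and each element of $XY$ has exactly one factorization $xy$ with $x\in X,y\in Y$ (equivalently, no word admits two different similar alternative factorizations on $(X,Y)$). $Z$ is an alt-induced code if $Z=XY$ for some alternative code $(X,Y)$. *)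

theory Defs
  imports Complex_Main
begin

definition nonempty_words :: "'a set \<Rightarrow> 'a list set" where
  "nonempty_words A = lists A - {[]}"

definition is_code :: "'a list set \<Rightarrow> bool" where
  "is_code Z \<longleftrightarrow> Z \<subseteq> UNIV - {[]} \<and>
     (\<forall>xs \<in> lists Z. \<forall>ys \<in> lists Z. concat xs = concat ys \<longrightarrow> xs = ys)"

definition standard_form :: "'a list set \<Rightarrow> bool" where
  "standard_form Z \<longleftrightarrow> finite Z \<and> is_code Z \<and> (\<forall>z\<in>Z. 2 \<le> length z) \<and>
     \<not> (\<exists>a. \<forall>z\<in>Z. hd z = a) \<and> \<not> (\<exists>a. \<forall>z\<in>Z. last z = a)"

definition word_prod :: "'a list set \<Rightarrow> 'a list set \<Rightarrow> 'a list set" where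
  "word_prod X Y = {x @ y | x y. x \<in> X \<and> y \<in> Y}"

definition starting_with :: "'a list set \<Rightarrow> 'a \<Rightarrow> 'a list set" where
  "starting_with Z a = {z \<in> Z. z \<noteq> [] \<and> hd z = a}"

definition left_quot :: "'a list \<Rightarrow> 'a list set \<Rightarrow> 'a list set" where
  "left_quot u S = {v. u @ v \<in> S}"

definition right_quot :: "'a list set \<Rightarrow> 'a list \<Rightarrow> 'a list set" where
  "right_quot S u = {v. v @ u \<in> S}"

definition alternative_code :: "'a set \<Rightarrow> 'a list set \<Rightarrow> 'a list set \<Rightarrow> bool" where
  "alternative_code A X Y \<longleftrightarrow>
     X \<noteq> {} \<and> Y \<noteq> {} \<and> X \<subseteq> nonempty_words A \<and> Y \<subseteq> nonempty_words A \<and>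
     is_code (word_prod X Y) \<and>
     (\<forall>z \<in> word_prod X Y. \<exists>!p. fst p \<in> X \<and> snd p \<in> Y \<and> fst p @ snd p = z)"

definition alt_induced :: "'a set \<Rightarrow> 'a list set \<Rightarrow> bool" where
  "alt_induced A Z \<longleftrightarrow> (\<exists>X Y. alternative_code A X Y \<and> Z = word_prod X Y)"

end

theory Submission
  imports Defs
begin

lemma wp_img: "word_prod X Y = (\<lambda>(x,y). x@y) ` (X \<times> Y)"
  by (auto simp: word_prod_def)

lemma inj_card: "finite X \<Longrightarrow> finite Y \<Longrightarrow> card (word_prod X Y) = card X * card Y
   \<Longrightarrow> inj_on (\<lambda>(x,y). x@y) (X\<times>Y)"
  by (metis eq_card_imp_inj_on wp_img card_cartesian_product finite_cartesian_product)

lemma card_wp: "inj_on (\<lambda>(x,y). x@y) (X\<times>Y) \<Longrightarrow> card (word_prod X Y) = card X * card Y"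
  by (simp add: wp_img card_image card_cartesian_product)

lemma alt_inj: assumes ac: "alternative_code A X Y" shows "inj_on (\<lambda>(x,y). x@y) (X\<times>Y)"
proof (rule inj_onI, clarify)
  fix x y x' y' assume p: "x \<in> X" "y \<in> Y" "x' \<in> X" "y' \<in> Y" and e: "x @ y = x' @ y'"
  have z: "x @ y \<in> word_prod X Y" using p unfolding word_prod_def by blast
  define P where "P r \<longleftrightarrow> fst r \<in> X \<and> snd r \<in> Y \<and> fst r @ snd r = x @ y" for r :: "'a list \<times> 'a list"
  have u: "\<exists>!r. P r"
    using ac z unfolding alternative_code_def P_def by blast
  have 1: "P (x,y)" using p by (simp add: P_def)
  have 2: "P (x',y')" using p e by (simp add: P_def)
  have "\<forall>a b. P a \<and> P b \<longrightarrow> a = b" using u by blast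
  then have "(x,y) = (x',y')" using 1 2 by blast
  then show "x = x' \<and> y = y'" by simp
qed

lemma inj_alt:
  assumes "X \<noteq> {}" "Y \<noteq> {}" "X \<subseteq> nonempty_words A" "Y \<subseteq> nonempty_words A"
    "is_code (word_prod X Y)" "inj_on (\<lambda>(x,y). x@y) (X\<times>Y)"
  shows "alternative_code A X Y"
  unfolding alternative_code_def
proof (intro conjI assms ballI)
  fix z assume "z \<in> word_prod X Y"
  then obtain x y where xy: "x \<in> X" "y \<in> Y" "z = x@y" by (auto simp: word_prod_def)
  show "\<exists>!p. fst p \<in> X \<and> snd p \<in> Y \<and> fst p @ snd p = z"
  proof (rule ex1I[of _ "(x,y)"])
    show "fst (x,y) \<in> X \<and> snd (x,y) \<in> Y \<and> fst (x,y) @ snd (x,y) = z" using xy by simp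
  next
    fix p assume "fst p \<in> X \<and> snd p \<in> Y \<and> fst p @ snd p = z"
    then have "p \<in> X\<times>Y" "(\<lambda>(x,y). x@y) p = (\<lambda>(x,y). x@y) (x,y)" using xy
      by (cases p, simp)+
    have "(x,y) \<in> X\<times>Y" using xy by simp
    then show "p = (x,y)" using inj_onD[OF assms(6)] \<open>p \<in> X\<times>Y\<close> \<open>(\<lambda>(x,y). x@y) p = (\<lambda>(x,y). x@y) (x,y)\<close> by blast
  qed
qed


lemma card_pos_from_real:
  assumes "real (card X) = real (card Z) / real (card Y)" "card Y > 0"
  shows "card Z = card X * card Y"
proof -
  have "real (card X) * real (card Y) = real (card Z)" using assms by (simp add: field_simps)
  then have "real (card X * card Y) = real (card Z)" by simp
  then show ?thesis by linarith
qed

lemma wp_mem: "x \<in> X \<Longrightarrow> y \<in> Y \<Longrightarrow> x @ y \<in> word_prod X Y"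
  unfolding word_prod_def by blast

lemma wp_memE: "z \<in> word_prod X Y \<Longrightarrow> (\<And>x y. x \<in> X \<Longrightarrow> y \<in> Y \<Longrightarrow> z = x @ y \<Longrightarrow> P) \<Longrightarrow> P"
  unfolding word_prod_def by blast

theorem propositionP:
  fixes A :: "'a set" and Z :: "'a list set" and a_t :: 'a and w :: "'a list"
  assumes "finite A" and "card A \<ge> 2"
    and "Z \<subseteq> nonempty_words A"
    and "standard_form Z"
    and "Gcd ((\<lambda>a. card (starting_with Z a)) ` A) > 1"
    and "a_t \<in> A" and "w \<in> starting_with Z a_t"
    and "length w = Min (length ` Z)"
  shows "alt_induced A Z \<longleftrightarrow>
    (let Pw = {u. u \<noteq> [] \<and> (\<exists>v. v \<noteq> [] \<and> u @ v = w)};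
         D = {d::nat. d \<ge> 2 \<and> (\<forall>a\<in>A. d dvd card (starting_with Z a))};
         Q = (\<lambda>u. {U. U \<subseteq> left_quot u (starting_with Z a_t) \<and> card U \<in> D});
         R = (\<lambda>Y. {V. V \<subseteq> (\<Inter>y\<in>Y. right_quot Z y) \<and>
                        real (card V) = real (card Z) / real (card Y)})
     in \<exists>u\<in>Pw. \<exists>Y\<in>Q u. \<exists>X\<in>R Y. Z = word_prod X Y)"
proof -
  have fin: "finite Z" and code: "is_code Z" and len2: "\<forall>z\<in>Z. 2 \<le> length z"
    and nlast: "\<not> (\<exists>a. \<forall>z\<in>Z. last z = a)"
    using assms(4) unfolding standard_form_def by auto
  have wZ: "w \<in> Z" and hdw: "hd w = a_t" and wne: "w \<noteq> []"
    using assms(7) by (auto simp: starting_with_def)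
  have minw: "length w \<le> length z" if "z \<in> Z" for z
  proof -
    have "Min (length ` Z) \<le> length z" using fin that by (intro Min_le) auto
    then show ?thesis using assms(8) by simp
  qed
  have ZA: "z \<in> lists A" if "z \<in> Z" for z
    using assms(3) that by (auto simp: nonempty_words_def)
  have dir1: "\<exists>u\<in>{u. u \<noteq> [] \<and> (\<exists>v. v \<noteq> [] \<and> u @ v = w)}.
      \<exists>Y\<in>{U. U \<subseteq> left_quot u (starting_with Z a_t) \<and> card U \<in> {d::nat. d \<ge> 2 \<and> (\<forall>a\<in>A. d dvd card (starting_with Z a))}}.
      \<exists>X\<in>{V. V \<subseteq> (\<Inter>y\<in>Y. right_quot Z y) \<and> real (card V) = real (card Z) / real (card Y)}.
      Z = word_prod X Y" if "alt_induced A Z"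
  proof -
    from that obtain X Y where ac: "alternative_code A X Y" and ZXY: "Z = word_prod X Y"
      unfolding alt_induced_def by blast
    have inj: "inj_on (\<lambda>(x,y). x@y) (X\<times>Y)" using alt_inj[OF ac] .
    have XE: "X \<noteq> {}" and YE: "Y \<noteq> {}" and XN: "X \<subseteq> nonempty_words A" and YN: "Y \<subseteq> nonempty_words A"
      using ac unfolding alternative_code_def by simp_all
    have Xne: "\<forall>x\<in>X. x \<noteq> []" using XN unfolding nonempty_words_def by blast
    have Yne: "\<forall>y\<in>Y. y \<noteq> []" using YN unfolding nonempty_words_def by blast
    have "w \<in> word_prod X Y" using wZ ZXY by simp
    then obtain x0 y0 where x0: "x0 \<in> X" "y0 \<in> Y" "w = x0 @ y0" by (rule wp_memE)
    have x0ne: "x0 \<noteq> []" using x0 Xne by blast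
    have uP: "x0 \<in> {u. u \<noteq> [] \<and> (\<exists>v. v \<noteq> [] \<and> u @ v = w)}" using x0 Xne Yne by auto
    have YZ: "x0 @ y \<in> Z" if "y \<in> Y" for y using ZXY wp_mem[OF x0(1) that] by simp
    have XZ: "x @ y0 \<in> Z" if "x \<in> X" for x using ZXY wp_mem[OF that x0(2)] by simp
    have "Y \<subseteq> drop (length x0) ` Z"
    proof
      fix y assume "y \<in> Y"
      then have "drop (length x0) (x0 @ y) \<in> drop (length x0) ` Z" using YZ by blast
      then show "y \<in> drop (length x0) ` Z" by simp
    qed
    then have finY: "finite Y" using fin finite_subset by blast
    have "X \<subseteq> (\<lambda>z. take (length z - length y0) z) ` Z"
    proof
      fix x assume "x \<in> X"
      then have "(\<lambda>z. take (length z - length y0) z) (x @ y0) \<in> (\<lambda>z. take (length z - length y0) z) ` Z"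
        using XZ by blast
      then show "x \<in> (\<lambda>z. take (length z - length y0) z) ` Z" by simp
    qed
    then have finX: "finite X" using fin finite_subset by blast
    have cZ: "card Z = card X * card Y" using card_wp[OF inj] ZXY by simp
    have cYpos: "card Y > 0" using finY YE by (simp add: card_gt_0_iff)
    have YQ: "Y \<subseteq> left_quot x0 (starting_with Z a_t)"
    proof
      fix y assume y: "y \<in> Y"
      have "hd (x0 @ y) = a_t" using x0ne hdw x0(3) by simp
      then show "y \<in> left_quot x0 (starting_with Z a_t)"
        using YZ[OF y] x0ne by (simp add: left_quot_def starting_with_def)
    qed
    have cY2: "card Y \<ge> 2"
    proof (rule ccontr)
      assume "\<not> card Y \<ge> 2"
      then have "card Y = 1" using cYpos by simp
      then obtain y1 where Y1: "Y = {y1}" using card_1_singletonE by blast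
      have y1ne: "y1 \<noteq> []" using Y1 Yne by simp
      have "\<forall>z\<in>Z. last z = last y1"
      proof
        fix z assume "z \<in> Z"
        then have "z \<in> word_prod X Y" using ZXY by simp
        then obtain x y where "x \<in> X" "y \<in> Y" "z = x @ y" by (rule wp_memE)
        then show "last z = last y1" using Y1 y1ne by simp
      qed
      then show False using nlast by blast
    qed
    have dv: "card Y dvd card (starting_with Z a)" if "a \<in> A" for a
    proof -
      let ?Xa = "{x\<in>X. hd x = a}"
      have eq: "starting_with Z a = word_prod ?Xa Y"
      proof
        show "starting_with Z a \<subseteq> word_prod ?Xa Y"
        proof
          fix z assume z: "z \<in> starting_with Z a"
          then have "z \<in> Z" "hd z = a" by (auto simp: starting_with_def)
          then have "z \<in> word_prod X Y" using ZXY by simp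
          then obtain x y where xy: "x \<in> X" "y \<in> Y" "z = x @ y" by (rule wp_memE)
          then have "hd x = a" using Xne \<open>hd z = a\<close> by simp
          then show "z \<in> word_prod ?Xa Y" using xy wp_mem[of x ?Xa y Y] by simp
        qed
      next
        show "word_prod ?Xa Y \<subseteq> starting_with Z a"
        proof
          fix z assume "z \<in> word_prod ?Xa Y"
          then obtain x y where xy: "x \<in> ?Xa" "y \<in> Y" "z = x @ y" by (rule wp_memE)
          then have "z \<in> Z" using ZXY wp_mem[of x X y Y] by simp
          moreover have "z \<noteq> [] \<and> hd z = a" using xy Xne by auto
          ultimately show "z \<in> starting_with Z a" by (simp add: starting_with_def)
        qed
      qed
      have "inj_on (\<lambda>(x,y). x@y) (?Xa\<times>Y)" using inj by (rule inj_on_subset) blast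
      then have "card (starting_with Z a) = card ?Xa * card Y" unfolding eq by (rule card_wp)
      then show ?thesis by simp
    qed
    have XR: "X \<subseteq> (\<Inter>y\<in>Y. right_quot Z y)"
    proof (intro subsetI INT_I)
      fix x y assume "x \<in> X" "y \<in> Y"
      then have "x @ y \<in> Z" using ZXY wp_mem by blast
      then show "x \<in> right_quot Z y" by (simp add: right_quot_def)
    qed
    have cX: "real (card X) = real (card Z) / real (card Y)" using cZ cYpos by simp
    have YQ': "Y \<in> {U. U \<subseteq> left_quot x0 (starting_with Z a_t) \<and> card U \<in> {d::nat. d \<ge> 2 \<and> (\<forall>a\<in>A. d dvd card (starting_with Z a))}}"
      using YQ cY2 dv by simp
    have XR': "X \<in> {V. V \<subseteq> (\<Inter>y\<in>Y. right_quot Z y) \<and> real (card V) = real (card Z) / real (card Y)}"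
      using XR cX by simp
    show ?thesis
      apply (rule bexI[where x=x0, OF _ uP])
      apply (rule bexI[where x=Y, OF _ YQ'])
      apply (rule bexI[where x=X, OF _ XR'])
      by (rule ZXY)
  qed
  have dir2: "alt_induced A Z" if "\<exists>u\<in>{u. u \<noteq> [] \<and> (\<exists>v. v \<noteq> [] \<and> u @ v = w)}.
      \<exists>Y\<in>{U. U \<subseteq> left_quot u (starting_with Z a_t) \<and> card U \<in> {d::nat. d \<ge> 2 \<and> (\<forall>a\<in>A. d dvd card (starting_with Z a))}}.
      \<exists>X\<in>{V. V \<subseteq> (\<Inter>y\<in>Y. right_quot Z y) \<and> real (card V) = real (card Z) / real (card Y)}.
      Z = word_prod X Y"
  proof -
    from that obtain u Y X where u: "u \<noteq> []" "\<exists>v. v \<noteq> [] \<and> u @ v = w"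
      and YL: "Y \<subseteq> left_quot u (starting_with Z a_t)" and cY2: "card Y \<ge> 2"
      and dv: "\<forall>a\<in>A. card Y dvd card (starting_with Z a)"
      and XR: "X \<subseteq> (\<Inter>y\<in>Y. right_quot Z y)"
      and cX: "real (card X) = real (card Z) / real (card Y)"
      and ZXY: "Z = word_prod X Y"
      by auto
    have finY: "finite Y" using cY2 card.infinite by fastforce
    have cYpos: "card Y > 0" using cY2 by simp
    have YE: "Y \<noteq> {}" using cYpos by auto
    have cZpos: "card Z > 0" using fin wZ card_gt_0_iff by blast
    have cXY: "card Z = card X * card Y" by (rule card_pos_from_real[OF cX cYpos])
    have "card X > 0" using cXY cZpos by simp
    then have finX: "finite X" and XE: "X \<noteq> {}" using card_gt_0_iff by blast+
    have inj: "inj_on (\<lambda>(x,y). x@y) (X\<times>Y)" using inj_card[OF finX finY] cXY ZXY by simp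
    have uY: "u @ y \<in> Z" "hd (u @ y) = a_t" if "y \<in> Y" for y
      using YL that by (auto simp: left_quot_def starting_with_def)
    obtain v where v: "v \<noteq> []" "u @ v = w" using u by blast
    have lu: "length u < length w" using v by auto
    have Yne: "y \<noteq> []" if "y \<in> Y" for y
    proof
      assume "y = []"
      then have "u \<in> Z" using uY(1)[OF that] by simp
      then show False using minw lu by fastforce
    qed
    have YA: "y \<in> lists A" if "y \<in> Y" for y using ZA[OF uY(1)[OF that]] by simp
    obtain y0 where y0: "y0 \<in> Y" using YE by blast
    have XZ: "x @ y \<in> Z" if "x \<in> X" "y \<in> Y" for x y using ZXY wp_mem[OF that] by simp
    have XA: "x \<in> lists A" if "x \<in> X" for x using ZA[OF XZ[OF that y0]] by simp
    have YN: "Y \<subseteq> nonempty_words A" using YA Yne by (auto simp: nonempty_words_def)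
    have codeXY: "is_code (word_prod X Y)" using code ZXY by simp
    show "alt_induced A Z"
    proof (cases "[] \<in> X")
      case False
      have XN: "X \<subseteq> nonempty_words A" using XA False by (auto simp: nonempty_words_def)
      have "alternative_code A X Y" by (rule inj_alt[OF XE YE XN YN codeXY inj])
      then show ?thesis using ZXY unfolding alt_induced_def by blast
    next
      case True
      have YZ: "y \<in> Z" if "y \<in> Y" for y using XZ[OF True that] by simp
      define a0 where "a0 = hd y0"
      have a0A: "a0 \<in> A" using YA[OF y0] Yne[OF y0] unfolding a0_def by (cases y0) auto
      define Ya where "Ya = {y\<in>Y. hd y = a0}"
      define Xa where "Xa = {x\<in>X. x \<noteq> [] \<and> hd x = a0}"
      define S where "S = ({[]} \<times> Ya) \<union> (Xa \<times> Y)"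
      have SXY: "S \<subseteq> X \<times> Y" using True unfolding S_def Xa_def Ya_def by blast
      have SA: "starting_with Z a0 = (\<lambda>(x,y). x@y) ` S"
      proof
        show "starting_with Z a0 \<subseteq> (\<lambda>(x,y). x@y) ` S"
        proof
          fix z assume z: "z \<in> starting_with Z a0"
          then have "z \<in> Z" "hd z = a0" by (auto simp: starting_with_def)
          then have "z \<in> word_prod X Y" using ZXY by simp
          then obtain x y where xy: "x \<in> X" "y \<in> Y" "z = x @ y" by (rule wp_memE)
          show "z \<in> (\<lambda>(x,y). x@y) ` S"
          proof (cases "x = []")
            case True
            then have "([],y) \<in> S" using xy \<open>hd z = a0\<close> unfolding S_def Ya_def by simp
            then show ?thesis using xy True by force
          next
            case False
            then have "(x,y) \<in> S" using xy \<open>hd z = a0\<close> unfolding S_def Xa_def by simp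
            then show ?thesis using xy by force
          qed
        qed
      next
        show "(\<lambda>(x,y). x@y) ` S \<subseteq> starting_with Z a0"
        proof
          fix z assume "z \<in> (\<lambda>(x,y). x@y) ` S"
          then obtain p where p: "p \<in> S" "z = (\<lambda>(x,y). x@y) p" by (rule imageE)
          obtain x y where "p = (x,y)" by (cases p)
          then have xy: "(x,y) \<in> S" "z = x @ y" using p by simp_all
          then have xyXY: "x \<in> X" "y \<in> Y" using SXY by auto
          have "z \<in> Z" using XZ[OF xyXY] xy by simp
          moreover have "z \<noteq> [] \<and> hd z = a0"
          proof (cases "x = []")
            case True
            then show ?thesis using xy Yne[OF xyXY(2)] unfolding S_def Ya_def Xa_def by auto
          next
            case False
            then show ?thesis using xy unfolding S_def Ya_def Xa_def by auto
          qed
          ultimately show "z \<in> starting_with Z a0" by (simp add: starting_with_def)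
        qed
      qed
      have finYa: "finite Ya" using finY unfolding Ya_def by simp
      have finXa: "finite Xa" using finX unfolding Xa_def by simp
      have disj: "({[]::'a list} \<times> Ya) \<inter> (Xa \<times> Y) = {}" unfolding Xa_def by blast
      have "card (starting_with Z a0) = card S"
        unfolding SA by (rule card_image[OF inj_on_subset[OF inj SXY]])
      also have "\<dots> = card ({[]::'a list} \<times> Ya) + card (Xa \<times> Y)"
        unfolding S_def using finYa finXa finY disj by (intro card_Un_disjoint) auto
      also have "\<dots> = card Ya + card Xa * card Y" by (simp add: card_cartesian_product)
      finally have ceq: "card (starting_with Z a0) = card Ya + card Xa * card Y" .
      have "card Y dvd card Ya"
        using dv a0A ceq by (metis dvd_add_left_iff dvd_triv_right)
      moreover have "card Ya > 0" using finYa y0 unfolding Ya_def a0_def card_gt_0_iff by blast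
      ultimately have "card Y \<le> card Ya" by (simp add: dvd_imp_le)
      moreover have "Ya \<subseteq> Y" unfolding Ya_def by blast
      ultimately have YaY: "Ya = Y" using finY card_seteq by blast
      have hdY: "hd y = a0" if "y \<in> Y" for y using YaY that unfolding Ya_def by blast
      have yform: "y = a0 # tl y" if "y \<in> Y" for y using hdY[OF that] Yne[OF that] by (cases y) auto
      have ylen: "2 \<le> length y" if "y \<in> Y" for y using len2 YZ[OF that] by blast
      define X1 where "X1 = (\<lambda>x. x @ [a0]) ` X"
      define Y1 where "Y1 = tl ` Y"
      have injX: "inj_on (\<lambda>x. x @ [a0]) X" by (rule inj_onI) simp
      have injY: "inj_on tl Y"
      proof (rule inj_onI)
        fix y y' assume "y \<in> Y" "y' \<in> Y" "tl y = tl y'"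
        then show "y = y'" using yform by metis
      qed
      have cX1: "card X1 = card X" unfolding X1_def by (rule card_image[OF injX])
      have cY1: "card Y1 = card Y" unfolding Y1_def by (rule card_image[OF injY])
      have W1: "word_prod X1 Y1 = Z"
      proof
        show "word_prod X1 Y1 \<subseteq> Z"
        proof
          fix z assume "z \<in> word_prod X1 Y1"
          then obtain x1 y1 where "x1 \<in> X1" "y1 \<in> Y1" "z = x1 @ y1" by (rule wp_memE)
          then obtain x y where xy: "x \<in> X" "y \<in> Y" "z = (x @ [a0]) @ tl y"
            unfolding X1_def Y1_def by blast
          then have "z = x @ y" using yform[OF xy(2)] by (metis append.assoc append_Cons append_Nil)
          then show "z \<in> Z" using XZ[OF xy(1,2)] by simp
        qed
      next
        show "Z \<subseteq> word_prod X1 Y1"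
        proof
          fix z assume "z \<in> Z"
          then have "z \<in> word_prod X Y" using ZXY by simp
          then obtain x y where xy: "x \<in> X" "y \<in> Y" "z = x @ y" by (rule wp_memE)
          then have "z = (x @ [a0]) @ tl y" using yform[OF xy(2)] by (metis append.assoc append_Cons append_Nil)
          moreover have "x @ [a0] \<in> X1" "tl y \<in> Y1" using xy unfolding X1_def Y1_def by auto
          ultimately show "z \<in> word_prod X1 Y1" using wp_mem by metis
        qed
      qed
      have finX1: "finite X1" unfolding X1_def using finX by simp
      have finY1: "finite Y1" unfolding Y1_def using finY by simp
      have inj1: "inj_on (\<lambda>(x,y). x@y) (X1\<times>Y1)"
        using inj_card[OF finX1 finY1] W1 cX1 cY1 cXY by simp
      have X1E: "X1 \<noteq> {}" unfolding X1_def using XE by simp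
      have Y1E: "Y1 \<noteq> {}" unfolding Y1_def using YE by simp
      have X1N: "X1 \<subseteq> nonempty_words A"
      proof
        fix x1 assume "x1 \<in> X1"
        then obtain x where x: "x \<in> X" "x1 = x @ [a0]" unfolding X1_def by blast
        have "x @ [a0] \<in> lists A" using XA[OF x(1)] a0A by simp
        then show "x1 \<in> nonempty_words A" using x by (simp add: nonempty_words_def)
      qed
      have Y1N: "Y1 \<subseteq> nonempty_words A"
      proof
        fix y1 assume "y1 \<in> Y1"
        then obtain y where y: "y \<in> Y" "y1 = tl y" unfolding Y1_def by blast
        have "tl y \<noteq> []" using ylen[OF y(1)] by (cases y) auto
        moreover have "tl y \<in> lists A" using YA[OF y(1)] by (cases y) auto
        ultimately show "y1 \<in> nonempty_words A" using y by (simp add: nonempty_words_def)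
      qed
      have "alternative_code A X1 Y1"
        by (rule inj_alt[OF X1E Y1E X1N Y1N _ inj1]) (simp add: W1 code)
      then show ?thesis using W1 unfolding alt_induced_def by blast
    qed
  qed
  show ?thesis unfolding Let_def
    apply (rule iffI)
     apply (erule dir1)
    apply (erule dir2)
    done
qed

end
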